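(* Let $\mathcal A$ be a small abelian category. The map $$\gamma_{0,\mathcal A}:\mathsf{Cob}_0(\mathcal A)\to K_0(\mathcal A),\qquad [M]\mapsto\sum_{b\in M}s(b)[X_b],$$ is a well-defined isomorphism of abelian groups.
   Context: $K_0(\mathcal A)$ is the abelian group generated by symbols $[X]$ for $X\in\mathrm{Ob}(\mathcal A)$, with relations $[X_2]=[X_1]+[X_3]$ for every short exact sequence $0\to X_1\to X_2\to X_3\to0$. An $\mathcal A$-decorated 0-foam $M$ is a finite set of points $b$, each with a sign $s(b)\in\{\pm1\}$ and an object $X_b\in\mathcal A$; $-M$ reverses all signs. An $\mathcal A$-decorated 1-foam is the realization of a finite oriented graph. Multiple edges, loops and vertexless circles are allowed. Its interior vertices are trivalent and are either "in" vertices (two edges in, one out) or "out" vertices (one in, two out). At each vertex the two edges of equal orientation type are thin and the third is thick. The foam carries a flat connection with fibers objects of $\mathcal A$: parallel transport along edges gives isomorphisms of fibers, and circles carry monodromy automorphisms. At each vertex the two thin edges are ordered (first, second), and a short exact sequence $0\to X_{\mathrm{first}}\to X_{\mathrm{thick}}\to X_{\mathrm{second}}\to0$ of nearby fibers is fixed. A boundary point has the fiber there and sign $+$ if the edge points toward it, $-$ otherwise. A 1-foam $U$ is a cobordism from $M_0$ to $M_1$ if $\partial U\cong M_1\sqcup(-M_0)$. $\mathsf{Cob}_0(\mathcal A)$ is the set of $\mathcal A$-decorated 0-foams modulo the equivalence relation generated by cobordism. It is an abelian group under disjoint union. *)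

theory Defs
  imports Main "HOL-Library.Multiset"
begin

record ('o, 'm) cat =
  cat_obj :: "'o set"
  cat_arr :: "'m set"
  cat_src :: "'m \<Rightarrow> 'o"
  cat_tgt :: "'m \<Rightarrow> 'o"
  cat_idn :: "'o \<Rightarrow> 'm"
  cat_cmp :: "'m \<Rightarrow> 'm \<Rightarrow> 'm"   (* cat_cmp C g f = g o f *)

definition hom :: "('o, 'm) cat \<Rightarrow> 'o \<Rightarrow> 'o \<Rightarrow> 'm set" where
  "hom C X Y = {f \<in> cat_arr C. cat_src C f = X \<and> cat_tgt C f = Y}"

definition category :: "('o, 'm) cat \<Rightarrow> bool" where
  "category C \<longleftrightarrow>
     (\<forall>f \<in> cat_arr C. cat_src C f \<in> cat_obj C \<and> cat_tgt C f \<in> cat_obj C)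
   \<and> (\<forall>X \<in> cat_obj C. cat_idn C X \<in> hom C X X)
   \<and> (\<forall>f \<in> cat_arr C. \<forall>g \<in> cat_arr C. cat_tgt C f = cat_src C g \<longrightarrow>
        cat_cmp C g f \<in> hom C (cat_src C f) (cat_tgt C g))
   \<and> (\<forall>f \<in> cat_arr C. cat_cmp C f (cat_idn C (cat_src C f)) = f
                      \<and> cat_cmp C (cat_idn C (cat_tgt C f)) f = f)
   \<and> (\<forall>f \<in> cat_arr C. \<forall>g \<in> cat_arr C. \<forall>h \<in> cat_arr C.
        cat_tgt C f = cat_src C g \<longrightarrow> cat_tgt C g = cat_src C h \<longrightarrow>
        cat_cmp C h (cat_cmp C g f) = cat_cmp C (cat_cmp C h g) f)"

definition iso :: "('o, 'm) cat \<Rightarrow> 'm \<Rightarrow> bool" where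
  "iso C f \<longleftrightarrow> f \<in> cat_arr C \<and>
     (\<exists>g \<in> hom C (cat_tgt C f) (cat_src C f).
        cat_cmp C g f = cat_idn C (cat_src C f) \<and> cat_cmp C f g = cat_idn C (cat_tgt C f))"

definition mono :: "('o, 'm) cat \<Rightarrow> 'm \<Rightarrow> bool" where
  "mono C f \<longleftrightarrow> f \<in> cat_arr C \<and>
     (\<forall>g \<in> cat_arr C. \<forall>h \<in> cat_arr C.
        cat_tgt C g = cat_src C f \<longrightarrow> cat_tgt C h = cat_src C f \<longrightarrow> cat_src C g = cat_src C h \<longrightarrow>
        cat_cmp C f g = cat_cmp C f h \<longrightarrow> g = h)"

definition epi :: "('o, 'm) cat \<Rightarrow> 'm \<Rightarrow> bool" where
  "epi C f \<longleftrightarrow> f \<in> cat_arr C \<and>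
     (\<forall>g \<in> cat_arr C. \<forall>h \<in> cat_arr C.
        cat_src C g = cat_tgt C f \<longrightarrow> cat_src C h = cat_tgt C f \<longrightarrow> cat_tgt C g = cat_tgt C h \<longrightarrow>
        cat_cmp C g f = cat_cmp C h f \<longrightarrow> g = h)"

definition zero_obj :: "('o, 'm) cat \<Rightarrow> 'o \<Rightarrow> bool" where
  "zero_obj C z \<longleftrightarrow> z \<in> cat_obj C \<and>
     (\<forall>X \<in> cat_obj C. (\<exists>!f. f \<in> hom C z X) \<and> (\<exists>!f. f \<in> hom C X z))"

definition zero_arr :: "('o, 'm) cat \<Rightarrow> 'm \<Rightarrow> bool" where
  "zero_arr C f \<longleftrightarrow> f \<in> cat_arr C \<and>
     (\<exists>z a b. zero_obj C z \<and> a \<in> hom C (cat_src C f) z \<and> b \<in> hom C z (cat_tgt C f)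
              \<and> f = cat_cmp C b a)"

definition is_kernel :: "('o, 'm) cat \<Rightarrow> 'm \<Rightarrow> 'm \<Rightarrow> bool" where
  "is_kernel C k f \<longleftrightarrow> k \<in> cat_arr C \<and> f \<in> cat_arr C \<and> cat_tgt C k = cat_src C f
     \<and> zero_arr C (cat_cmp C f k)
     \<and> (\<forall>h \<in> cat_arr C. cat_tgt C h = cat_src C f \<and> zero_arr C (cat_cmp C f h) \<longrightarrow>
          (\<exists>!u. u \<in> hom C (cat_src C h) (cat_src C k) \<and> cat_cmp C k u = h))"

definition is_cokernel :: "('o, 'm) cat \<Rightarrow> 'm \<Rightarrow> 'm \<Rightarrow> bool" where
  "is_cokernel C q f \<longleftrightarrow> q \<in> cat_arr C \<and> f \<in> cat_arr C \<and> cat_src C q = cat_tgt C f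
     \<and> zero_arr C (cat_cmp C q f)
     \<and> (\<forall>h \<in> cat_arr C. cat_src C h = cat_tgt C f \<and> zero_arr C (cat_cmp C h f) \<longrightarrow>
          (\<exists>!u. u \<in> hom C (cat_tgt C q) (cat_tgt C h) \<and> cat_cmp C u q = h))"

definition has_binary_products :: "('o, 'm) cat \<Rightarrow> bool" where
  "has_binary_products C \<longleftrightarrow> (\<forall>X \<in> cat_obj C. \<forall>Y \<in> cat_obj C. \<exists>P p q.
     p \<in> hom C P X \<and> q \<in> hom C P Y \<and>
     (\<forall>W f g. f \<in> hom C W X \<and> g \<in> hom C W Y \<longrightarrow>
        (\<exists>!u. u \<in> hom C W P \<and> cat_cmp C p u = f \<and> cat_cmp C q u = g)))"

definition has_binary_coproducts :: "('o, 'm) cat \<Rightarrow> bool" where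
  "has_binary_coproducts C \<longleftrightarrow> (\<forall>X \<in> cat_obj C. \<forall>Y \<in> cat_obj C. \<exists>S i j.
     i \<in> hom C X S \<and> j \<in> hom C Y S \<and>
     (\<forall>W f g. f \<in> hom C X W \<and> g \<in> hom C Y W \<longrightarrow>
        (\<exists>!u. u \<in> hom C S W \<and> cat_cmp C u i = f \<and> cat_cmp C u j = g)))"

text \<open>Abelian category (Freyd--Mitchell definition). Smallness is automatic:
  the objects form a set.\<close>
definition abelian_cat :: "('o, 'm) cat \<Rightarrow> bool" where
  "abelian_cat C \<longleftrightarrow> category C
   \<and> (\<exists>z. zero_obj C z)
   \<and> has_binary_products C \<and> has_binary_coproducts C
   \<and> (\<forall>f \<in> cat_arr C. (\<exists>k. is_kernel C k f) \<and> (\<exists>q. is_cokernel C q f))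
   \<and> (\<forall>f. mono C f \<longrightarrow> (\<exists>g. is_kernel C f g))
   \<and> (\<forall>f. epi C f \<longrightarrow> (\<exists>g. is_cokernel C f g))"

definition short_exact :: "('o, 'm) cat \<Rightarrow> 'm \<Rightarrow> 'm \<Rightarrow> bool" where
  "short_exact C f g \<longleftrightarrow> is_kernel C f g \<and> is_cokernel C g f"

text \<open>Free abelian group on the objects: finitely supported integer functions.\<close>
definition free_ab :: "('o, 'm) cat \<Rightarrow> ('o \<Rightarrow> int) set" where
  "free_ab C = {\<phi>. finite {X. \<phi> X \<noteq> 0} \<and> {X. \<phi> X \<noteq> 0} \<subseteq> cat_obj C}"

definition delta :: "'o \<Rightarrow> 'o \<Rightarrow> int" where
  "delta X = (\<lambda>Y. if Y = X then 1 else 0)"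

inductive_set K0_relations :: "('o, 'm) cat \<Rightarrow> ('o \<Rightarrow> int) set" for C where
  zero: "(\<lambda>_. 0) \<in> K0_relations C"
| gen: "short_exact C f g \<Longrightarrow>
        (\<lambda>Y. delta (cat_tgt C f) Y - delta (cat_src C f) Y - delta (cat_tgt C g) Y) \<in> K0_relations C"
| add: "\<phi> \<in> K0_relations C \<Longrightarrow> \<psi> \<in> K0_relations C \<Longrightarrow> (\<lambda>Y. \<phi> Y + \<psi> Y) \<in> K0_relations C"
| neg: "\<phi> \<in> K0_relations C \<Longrightarrow> (\<lambda>Y. - \<phi> Y) \<in> K0_relations C"

definition K0_rel :: "('o, 'm) cat \<Rightarrow> (('o \<Rightarrow> int) \<times> ('o \<Rightarrow> int)) set" where
  "K0_rel C = {(\<phi>, \<psi>). \<phi> \<in> free_ab C \<and> \<psi> \<in> free_ab C \<and> (\<lambda>Y. \<phi> Y - \<psi> Y) \<in> K0_relations C}"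

text \<open>K_0(A) as a set of classes; the group law is induced by pointwise addition.\<close>
definition K0 :: "('o, 'm) cat \<Rightarrow> ('o \<Rightarrow> int) set set" where
  "K0 C = free_ab C // K0_rel C"

text \<open>A decorated 0-foam up to isomorphism: a finite multiset of points (sign, object),
  sign True meaning +. Disjoint union is multiset sum.\<close>
type_synonym 'o zfoam = "(bool \<times> 'o) multiset"

definition zfoams :: "('o, 'm) cat \<Rightarrow> 'o zfoam set" where
  "zfoams C = {M. \<forall>p \<in># M. snd p \<in> cat_obj C}"

definition zneg :: "'o zfoam \<Rightarrow> 'o zfoam" where
  "zneg M = image_mset (\<lambda>(s, X). (\<not> s, X)) M"

datatype side = Hd | Tl
datatype vkind = VIn | VOut | VBd

type_synonym edge_end = "nat \<times> side"

record ('o, 'm) foam1 =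
  fV :: "nat set"
  fE :: "nat set"
  ftl :: "nat \<Rightarrow> nat"
  fhd :: "nat \<Rightarrow> nat"
  fXt :: "nat \<Rightarrow> 'o"        (* fiber near the tail *)
  fXh :: "nat \<Rightarrow> 'o"        (* fiber near the head *)
  ftr :: "nat \<Rightarrow> 'm"        (* parallel transport tail -> head *)
  fkind :: "nat \<Rightarrow> vkind"
  ffirst :: "nat \<Rightarrow> edge_end"   (* first thin edge-end at a vertex *)
  fsecond :: "nat \<Rightarrow> edge_end"  (* second thin edge-end *)
  fthick :: "nat \<Rightarrow> edge_end"   (* thick edge-end *)
  fses1 :: "nat \<Rightarrow> 'm"
  fses2 :: "nat \<Rightarrow> 'm"
  fCirc :: "nat set"         (* vertexless circles *)
  fcobj :: "nat \<Rightarrow> 'o"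
  fcmon :: "nat \<Rightarrow> 'm"      (* monodromy of a circle *)

fun end_vertex :: "('o, 'm, 'z) foam1_scheme \<Rightarrow> edge_end \<Rightarrow> nat" where
  "end_vertex U (e, Hd) = fhd U e"
| "end_vertex U (e, Tl) = ftl U e"

fun end_fiber :: "('o, 'm, 'z) foam1_scheme \<Rightarrow> edge_end \<Rightarrow> 'o" where
  "end_fiber U (e, Hd) = fXh U e"
| "end_fiber U (e, Tl) = fXt U e"

definition ends :: "('o, 'm, 'z) foam1_scheme \<Rightarrow> edge_end set" where
  "ends U = fE U \<times> UNIV"

definition ends_at :: "('o, 'm, 'z) foam1_scheme \<Rightarrow> nat \<Rightarrow> edge_end set" where
  "ends_at U v = {x \<in> ends U. end_vertex U x = v}"

definition wf_vertex :: "('o, 'm) cat \<Rightarrow> ('o, 'm, 'z) foam1_scheme \<Rightarrow> nat \<Rightarrow> side \<Rightarrow> side \<Rightarrow> bool" where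
  "wf_vertex C U v thin thk \<longleftrightarrow>
     ends_at U v = {ffirst U v, fsecond U v, fthick U v} \<and> card (ends_at U v) = 3
   \<and> snd (ffirst U v) = thin \<and> snd (fsecond U v) = thin \<and> snd (fthick U v) = thk
   \<and> fses1 U v \<in> hom C (end_fiber U (ffirst U v)) (end_fiber U (fthick U v))
   \<and> fses2 U v \<in> hom C (end_fiber U (fthick U v)) (end_fiber U (fsecond U v))
   \<and> short_exact C (fses1 U v) (fses2 U v)"

definition wf_foam :: "('o, 'm) cat \<Rightarrow> ('o, 'm) foam1 \<Rightarrow> bool" where
  "wf_foam C U \<longleftrightarrow> finite (fV U) \<and> finite (fE U) \<and> finite (fCirc U)
   \<and> (\<forall>e \<in> fE U. ftl U e \<in> fV U \<and> fhd U e \<in> fV U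
        \<and> ftr U e \<in> hom C (fXt U e) (fXh U e) \<and> iso C (ftr U e))
   \<and> (\<forall>c \<in> fCirc U. fcmon U c \<in> hom C (fcobj U c) (fcobj U c) \<and> iso C (fcmon U c))
   \<and> (\<forall>v \<in> fV U. case fkind U v of
         VBd \<Rightarrow> card (ends_at U v) = 1
       | VIn \<Rightarrow> wf_vertex C U v Hd Tl
       | VOut \<Rightarrow> wf_vertex C U v Tl Hd)"

text \<open>Boundary: one point per boundary vertex; sign + iff the edge points toward it.\<close>
definition foam_boundary :: "('o, 'm) foam1 \<Rightarrow> 'o zfoam" where
  "foam_boundary U = image_mset (\<lambda>x. (snd x = Hd, end_fiber U x))
      (mset_set {x \<in> ends U. fkind U (end_vertex U x) = VBd})"

definition cobordant :: "('o, 'm) cat \<Rightarrow> 'o zfoam \<Rightarrow> 'o zfoam \<Rightarrow> bool" where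
  "cobordant C M0 M1 \<longleftrightarrow> (\<exists>U. wf_foam C U \<and> foam_boundary U = M1 + zneg M0)"

definition cob_rel :: "('o, 'm) cat \<Rightarrow> ('o zfoam \<times> 'o zfoam) set" where
  "cob_rel C = {(M, N). M \<in> zfoams C \<and> N \<in> zfoams C \<and>
      (\<lambda>A B. cobordant C A B \<or> cobordant C B A)\<^sup>*\<^sup>* M N}"

definition Cob0 :: "('o, 'm) cat \<Rightarrow> 'o zfoam set set" where
  "Cob0 C = zfoams C // cob_rel C"

definition gamma0 :: "'o zfoam \<Rightarrow> 'o \<Rightarrow> int" where
  "gamma0 M = (\<lambda>Y. int (count M (True, Y)) - int (count M (False, Y)))"

end

theory Submission
  imports Defs
begin


lemma catD:
  assumes "category C"
  shows cat_hom_obj: "f \<in> hom C X Y \<Longrightarrow> X \<in> cat_obj C \<and> Y \<in> cat_obj C"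
  and cat_idn_hom: "X \<in> cat_obj C \<Longrightarrow> cat_idn C X \<in> hom C X X"
  and cat_cmp_hom: "f \<in> hom C X Y \<Longrightarrow> g \<in> hom C Y Z \<Longrightarrow> cat_cmp C g f \<in> hom C X Z"
  and cat_idr: "f \<in> hom C X Y \<Longrightarrow> cat_cmp C f (cat_idn C X) = f"
  and cat_idl: "f \<in> hom C X Y \<Longrightarrow> cat_cmp C (cat_idn C Y) f = f"
  and cat_assoc: "f \<in> hom C X Y \<Longrightarrow> g \<in> hom C Y Z \<Longrightarrow> h \<in> hom C Z W \<Longrightarrow>
        cat_cmp C h (cat_cmp C g f) = cat_cmp C (cat_cmp C h g) f"
  using assms unfolding category_def hom_def by auto

lemma homI: "f \<in> cat_arr C \<Longrightarrow> f \<in> hom C (cat_src C f) (cat_tgt C f)"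
  by (simp add: hom_def)

lemma homD: "f \<in> hom C X Y \<Longrightarrow> f \<in> cat_arr C \<and> cat_src C f = X \<and> cat_tgt C f = Y"
  by (simp add: hom_def)

lemma iso_inv:
  assumes "iso C f" "f \<in> hom C X Y"
  obtains g where "g \<in> hom C Y X" "cat_cmp C g f = cat_idn C X" "cat_cmp C f g = cat_idn C Y"
  using assms unfolding iso_def hom_def by auto

lemma iso_idn: assumes "category C" "X \<in> cat_obj C" shows "iso C (cat_idn C X)"
proof -
  have h: "cat_idn C X \<in> hom C X X" using cat_idn_hom[OF assms] .
  have "cat_cmp C (cat_idn C X) (cat_idn C X) = cat_idn C X" using cat_idl[OF assms(1) h] .
  with h show ?thesis unfolding iso_def hom_def by auto
qed

lemma zero_objD:
  assumes "zero_obj C z" "X \<in> cat_obj C"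
  shows "\<exists>!f. f \<in> hom C z X" "\<exists>!f. f \<in> hom C X z"
  using assms unfolding zero_obj_def by auto

lemma zero_arr_into:
  assumes C: "category C" and z: "zero_obj C z" and h: "h \<in> hom C X z"
  shows "zero_arr C h"
proof -
  have zo: "z \<in> cat_obj C" using z by (simp add: zero_obj_def)
  have i: "cat_idn C z \<in> hom C z z" using cat_idn_hom[OF C zo] .
  have e: "h = cat_cmp C (cat_idn C z) h" using cat_idl[OF C h] by simp
  show ?thesis unfolding zero_arr_def using h z i e homD[OF h] by blast
qed

lemma iso_ses:
  assumes C: "category C" and z: "zero_obj C z" and f: "f \<in> hom C X Y" and fi: "iso C f"
    and g: "g \<in> hom C Y z"
  shows "short_exact C f g"
proof -
  obtain fi' where fi': "fi' \<in> hom C Y X" "cat_cmp C fi' f = cat_idn C X" "cat_cmp C f fi' = cat_idn C Y"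
    using iso_inv[OF fi f] by blast
  have Xo: "X \<in> cat_obj C" and Yo: "Y \<in> cat_obj C" using cat_hom_obj[OF C f] by auto
  have zo: "z \<in> cat_obj C" using z by (simp add: zero_obj_def)
  have gf: "cat_cmp C g f \<in> hom C X z" using cat_cmp_hom[OF C f g] .
  have zgf: "zero_arr C (cat_cmp C g f)"
    using zero_arr_into[OF C z gf] .
  have K: "is_kernel C f g"
    unfolding is_kernel_def
  proof (intro conjI ballI impI)
    show "f \<in> cat_arr C" "g \<in> cat_arr C" "cat_tgt C f = cat_src C g" using f g by (auto simp: hom_def)
    show "zero_arr C (cat_cmp C g f)" by fact
    fix h assume h: "h \<in> cat_arr C" "cat_tgt C h = cat_src C g \<and> zero_arr C (cat_cmp C g h)"
    have hh: "h \<in> hom C (cat_src C h) Y" using h g by (auto simp: hom_def)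
    have sf: "cat_src C f = X" using f by (simp add: hom_def)
    show "\<exists>!u. u \<in> hom C (cat_src C h) (cat_src C f) \<and> cat_cmp C f u = h"
    proof (rule ex1I[of _ "cat_cmp C fi' h"])
      have u: "cat_cmp C fi' h \<in> hom C (cat_src C h) X" using cat_cmp_hom[OF C hh fi'(1)] .
      have "cat_cmp C f (cat_cmp C fi' h) = cat_cmp C (cat_idn C Y) h"
        using cat_assoc[OF C hh fi'(1) f] fi'(3) by simp
      also have "\<dots> = h" using cat_idl[OF C hh] .
      finally show "cat_cmp C fi' h \<in> hom C (cat_src C h) (cat_src C f) \<and> cat_cmp C f (cat_cmp C fi' h) = h"
        using u sf by simp
    next
      fix u assume u: "u \<in> hom C (cat_src C h) (cat_src C f) \<and> cat_cmp C f u = h"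
      hence u1: "u \<in> hom C (cat_src C h) X" using sf by simp
      have "cat_cmp C fi' h = cat_cmp C fi' (cat_cmp C f u)" using u by simp
      also have "\<dots> = cat_cmp C (cat_idn C X) u" using cat_assoc[OF C u1 f fi'(1)] fi'(2) by simp
      also have "\<dots> = u" using cat_idl[OF C u1] .
      finally show "u = cat_cmp C fi' h" by simp
    qed
  qed
  have Q: "is_cokernel C g f"
    unfolding is_cokernel_def
  proof (intro conjI ballI impI)
    show "f \<in> cat_arr C" "g \<in> cat_arr C" "cat_src C g = cat_tgt C f" using f g by (auto simp: hom_def)
    show "zero_arr C (cat_cmp C g f)" by fact
    fix h assume h: "h \<in> cat_arr C" "cat_src C h = cat_tgt C f \<and> zero_arr C (cat_cmp C h f)"
    define W where "W = cat_tgt C h"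
    have hh: "h \<in> hom C Y W" using h f by (auto simp: hom_def W_def)
    have Wo: "W \<in> cat_obj C" using cat_hom_obj[OF C hh] by auto
    have tg: "cat_tgt C g = z" using g by (simp add: hom_def)
    obtain u where u: "u \<in> hom C z W" using zero_objD(1)[OF z Wo] by blast
    have uniq: "\<And>v. v \<in> hom C z W \<Longrightarrow> v = u" using zero_objD(1)[OF z Wo] u by blast
    obtain z' a b where zab: "zero_obj C z'" "a \<in> hom C (cat_src C (cat_cmp C h f)) z'"
        "b \<in> hom C z' (cat_tgt C (cat_cmp C h f))" "cat_cmp C h f = cat_cmp C b a"
      using h(2) unfolding zero_arr_def by blast
    have hf: "cat_cmp C h f \<in> hom C X W" using cat_cmp_hom[OF C f hh] .
    have a: "a \<in> hom C X z'" and b: "b \<in> hom C z' W" using zab homD[OF hf] by auto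
    have z'o: "z' \<in> cat_obj C" using zab(1) by (simp add: zero_obj_def)
    obtain c where c: "c \<in> hom C z z'" using zero_objD(2)[OF zab(1) zo] by blast
    have af: "cat_cmp C a fi' \<in> hom C Y z'" using cat_cmp_hom[OF C fi'(1) a] .
    have cg: "cat_cmp C c g \<in> hom C Y z'" using cat_cmp_hom[OF C g c] .
    have acg: "cat_cmp C a fi' = cat_cmp C c g" using zero_objD(2)[OF zab(1) Yo] af cg by blast
    have "h = cat_cmp C h (cat_idn C Y)" using cat_idr[OF C hh] by simp
    also have "\<dots> = cat_cmp C (cat_cmp C h f) fi'" using cat_assoc[OF C fi'(1) f hh] fi'(3) by simp
    also have "\<dots> = cat_cmp C b (cat_cmp C a fi')" using zab(4) cat_assoc[OF C fi'(1) a b] by simp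
    also have "\<dots> = cat_cmp C (cat_cmp C b c) g" using acg cat_assoc[OF C g c b] by simp
    finally have hbc: "h = cat_cmp C (cat_cmp C b c) g" .
    have bc: "cat_cmp C b c \<in> hom C z W" using cat_cmp_hom[OF C c b] .
    show "\<exists>!u. u \<in> hom C (cat_tgt C g) (cat_tgt C h) \<and> cat_cmp C u g = h"
    proof (rule ex1I[of _ "cat_cmp C b c"])
      show "cat_cmp C b c \<in> hom C (cat_tgt C g) (cat_tgt C h) \<and> cat_cmp C (cat_cmp C b c) g = h"
        using bc hbc tg W_def by simp
    next
      fix v assume "v \<in> hom C (cat_tgt C g) (cat_tgt C h) \<and> cat_cmp C v g = h"
      hence vh: "v \<in> hom C z W" using tg W_def by simp
      show "v = cat_cmp C b c" using uniq[OF vh] uniq[OF bc] by simp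
    qed
  qed
  show ?thesis unfolding short_exact_def using K Q by blast
qed



lemma rel_cong: "\<phi> \<in> K0_relations C \<Longrightarrow> (\<And>Y. \<phi> Y = \<psi> Y) \<Longrightarrow> \<psi> \<in> K0_relations C"
proof -
  assume "\<phi> \<in> K0_relations C" "\<And>Y. \<phi> Y = \<psi> Y"
  moreover have "\<phi> = \<psi>" using calculation by auto
  ultimately show ?thesis by simp
qed

lemma rel_zero': "(\<And>Y. \<psi> Y = 0) \<Longrightarrow> \<psi> \<in> K0_relations C"
  using rel_cong[OF K0_relations.zero] by metis

lemma rel_add': "\<phi> \<in> K0_relations C \<Longrightarrow> \<psi> \<in> K0_relations C \<Longrightarrow> (\<And>Y. \<chi> Y = \<phi> Y + \<psi> Y)
   \<Longrightarrow> \<chi> \<in> K0_relations C"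
  using rel_cong[OF K0_relations.add] by metis

lemma rel_neg': "\<phi> \<in> K0_relations C \<Longrightarrow> (\<And>Y. \<chi> Y = - \<phi> Y) \<Longrightarrow> \<chi> \<in> K0_relations C"
  using rel_cong[OF K0_relations.neg] by metis

lemma rel_diff': "\<phi> \<in> K0_relations C \<Longrightarrow> \<psi> \<in> K0_relations C \<Longrightarrow> (\<And>Y. \<chi> Y = \<phi> Y - \<psi> Y)
   \<Longrightarrow> \<chi> \<in> K0_relations C"
proof -
  assume a: "\<phi> \<in> K0_relations C" "\<psi> \<in> K0_relations C" "\<And>Y. \<chi> Y = \<phi> Y - \<psi> Y"
  have "(\<lambda>Y. - \<psi> Y) \<in> K0_relations C" using a(2) by (rule K0_relations.neg)
  thus ?thesis using rel_add'[OF a(1)] a(3) by simp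
qed

lemma rel_sum: "finite A \<Longrightarrow> (\<And>x. x \<in> A \<Longrightarrow> f x \<in> K0_relations C)
   \<Longrightarrow> (\<lambda>Y. \<Sum>x\<in>A. f x Y) \<in> K0_relations C"
proof (induction A rule: finite_induct)
  case empty then show ?case by (simp add: rel_zero')
next
  case (insert a A)
  show ?case
    apply (rule rel_add'[of "f a" C "\<lambda>Y. \<Sum>x\<in>A. f x Y"])
    using insert by auto
qed

lemma rel_gen': "short_exact C f g \<Longrightarrow> (\<And>Y. \<chi> Y = delta (cat_tgt C f) Y - delta (cat_src C f) Y - delta (cat_tgt C g) Y)
  \<Longrightarrow> \<chi> \<in> K0_relations C"
  using rel_cong[OF K0_relations.gen] by metis

lemma rel_iso:
  assumes C: "category C" and z: "zero_obj C z" and f: "f \<in> hom C X Y" and fi: "iso C f"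
  shows "(\<lambda>W. delta Y W - delta X W) \<in> K0_relations C"
proof -
  have zo: "z \<in> cat_obj C" using z by (simp add: zero_obj_def)
  have Yo: "Y \<in> cat_obj C" using cat_hom_obj[OF C f] by auto
  obtain g where g: "g \<in> hom C Y z" using zero_objD(2)[OF z Yo] by blast
  have s1: "short_exact C f g" using iso_ses[OF C z f fi g] .
  have r1: "(\<lambda>W. delta Y W - delta X W - delta z W) \<in> K0_relations C"
    by (rule rel_gen'[OF s1]) (use f g in \<open>simp add: hom_def\<close>)
  obtain g0 where g0: "g0 \<in> hom C z z" using zero_objD(2)[OF z zo] by blast
  have s2: "short_exact C (cat_idn C z) g0" using iso_ses[OF C z cat_idn_hom[OF C zo] iso_idn[OF C zo] g0] .
  have r2: "(\<lambda>W. delta z W - delta z W - delta z W) \<in> K0_relations C"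
    by (rule rel_gen'[OF s2]) (use g0 cat_idn_hom[OF C zo] in \<open>simp add: hom_def\<close>)
  show ?thesis by (rule rel_diff'[OF r1 r2]) simp
qed

lemma free_abI: "finite S \<Longrightarrow> S \<subseteq> cat_obj C \<Longrightarrow> (\<And>Y. \<phi> Y \<noteq> 0 \<Longrightarrow> Y \<in> S) \<Longrightarrow> \<phi> \<in> free_ab C"
  unfolding free_ab_def by (auto intro: finite_subset)

lemma rel_free: assumes C: "category C" shows "\<phi> \<in> K0_relations C \<Longrightarrow> \<phi> \<in> free_ab C"
proof (induction rule: K0_relations.induct)
  case zero then show ?case by (simp add: free_ab_def)
next
  case (gen f g)
  have "f \<in> cat_arr C" "g \<in> cat_arr C" using gen by (auto simp: short_exact_def is_kernel_def)
  hence "cat_tgt C f \<in> cat_obj C" "cat_src C f \<in> cat_obj C" "cat_tgt C g \<in> cat_obj C"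
    using C unfolding category_def by auto
  then show ?case
    by (intro free_abI[of "{cat_tgt C f, cat_src C f, cat_tgt C g}"]) (auto simp: delta_def split: if_splits)
next
  case (add \<phi> \<psi>)
  then show ?case
    by (intro free_abI[of "{X. \<phi> X \<noteq> 0} \<union> {X. \<psi> X \<noteq> 0}"]) (auto simp: free_ab_def)
next
  case (neg \<phi>)
  then show ?case by (simp add: free_ab_def)
qed

lemma gamma0_plus: "gamma0 (M + N) = (\<lambda>Y. gamma0 M Y + gamma0 N Y)"
  by (auto simp: gamma0_def)

lemma count_zneg: "count (zneg M) (s, X) = count M (\<not> s, X)"
  by (induction M) (auto simp: zneg_def)

lemma gamma0_zneg: "gamma0 (zneg M) = (\<lambda>Y. - gamma0 M Y)"
  by (auto simp: gamma0_def count_zneg)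

lemma gamma0_free: "M \<in> zfoams C \<Longrightarrow> gamma0 M \<in> free_ab C"
  apply (rule free_abI[of "snd ` set_mset M"])
    apply (auto simp: zfoams_def gamma0_def)
  by (metis count_inI image_iff of_nat_eq_iff snd_conv)

lemma zfoams_plus: "M \<in> zfoams C \<Longrightarrow> N \<in> zfoams C \<Longrightarrow> M + N \<in> zfoams C"
  by (auto simp: zfoams_def)

lemma zfoams_zneg: "M \<in> zfoams C \<Longrightarrow> zneg M \<in> zfoams C"
  by (auto simp: zfoams_def zneg_def)



lemma UNIV_side: "(UNIV :: side set) = {Hd, Tl}"
  using side.exhaust by auto

lemma finite_ends: "finite (fE U) \<Longrightarrow> finite (ends U)"
  unfolding ends_def by (simp add: UNIV_side)

lemma gamma0_add_mset: "gamma0 (add_mset a M) Y = gamma0 M Y + (if fst a then 1 else -1) * (if snd a = Y then 1 else 0)"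
  by (cases a) (auto simp: gamma0_def)

lemma gamma0_img: "finite A \<Longrightarrow> gamma0 (image_mset h (mset_set A)) Y =
   (\<Sum>x\<in>A. (if fst (h x) then 1 else -1) * (if snd (h x) = Y then 1 else 0))"
  by (induction A rule: finite_induct) (auto simp: gamma0_add_mset, simp add: gamma0_def)

lemma card3: "card {p,q,t} = 3 \<Longrightarrow> p \<noteq> q \<and> p \<noteq> t \<and> q \<noteq> t"
proof (intro conjI notI)
  assume c: "card {p,q,t} = 3"
  have k: "card {a, b} \<le> 2" for a b :: 'a by (cases "a = b") (simp_all add: card_insert_if)
  { assume "p = q" thus False using c k[of q t] by simp }
  { assume "p = t" thus False using c k[of q t] by (simp add: insert_commute) }
  { assume "q = t" thus False using c k[of p t] by simp }
qed

definition wt :: "('o, 'm, 'z) foam1_scheme \<Rightarrow> edge_end \<Rightarrow> 'o \<Rightarrow> int" where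
  "wt U x = (\<lambda>Y. if snd x = Hd then delta (end_fiber U x) Y else - delta (end_fiber U x) Y)"

lemma sum3: "p \<noteq> q \<Longrightarrow> p \<noteq> t \<Longrightarrow> q \<noteq> t \<Longrightarrow> (\<Sum>x\<in>{p,q,t}. f x (Y::'b)) = f p Y + f q Y + (f t Y::int)"
  by (simp add: algebra_simps)

lemma vertex_rel_core:
  assumes w: "wf_vertex C U v a b"
  shows "(\<lambda>Y. delta (end_fiber U (fthick U v)) Y - delta (end_fiber U (ffirst U v)) Y - delta (end_fiber U (fsecond U v)) Y) \<in> K0_relations C"
    "\<And>Y. (\<Sum>x\<in>ends_at U v. wt U x Y) = wt U (ffirst U v) Y + wt U (fsecond U v) Y + wt U (fthick U v) Y"
    "snd (ffirst U v) = a" "snd (fsecond U v) = a" "snd (fthick U v) = b"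
proof -
  let ?p = "ffirst U v" and ?q = "fsecond U v" and ?t = "fthick U v"
  have e: "ends_at U v = {?p, ?q, ?t}" and c: "card (ends_at U v) = 3" using w unfolding wf_vertex_def by auto
  have d: "?p \<noteq> ?q" "?p \<noteq> ?t" "?q \<noteq> ?t"
    using card3[of ?p ?q ?t] c unfolding e by auto
  show "snd ?p = a" "snd ?q = a" "snd ?t = b" using w unfolding wf_vertex_def by auto
  have h1: "fses1 U v \<in> hom C (end_fiber U ?p) (end_fiber U ?t)"
   and h2: "fses2 U v \<in> hom C (end_fiber U ?t) (end_fiber U ?q)"
   and se: "short_exact C (fses1 U v) (fses2 U v)" using w unfolding wf_vertex_def by auto
  show "(\<lambda>Y. delta (end_fiber U ?t) Y - delta (end_fiber U ?p) Y - delta (end_fiber U ?q) Y) \<in> K0_relations C"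
    by (rule rel_gen'[OF se]) (use h1 h2 in \<open>simp add: hom_def\<close>)
  show "\<And>Y. (\<Sum>x\<in>ends_at U v. wt U x Y) = wt U ?p Y + wt U ?q Y + wt U ?t Y"
    unfolding e by (rule sum3[OF d])
qed

lemma vertex_rel_in:
  assumes w: "wf_vertex C U v Hd Tl"
  shows "(\<lambda>Y. \<Sum>x\<in>ends_at U v. wt U x Y) \<in> K0_relations C"
proof -
  note c = vertex_rel_core[OF w]
  have eq: "(\<lambda>Y. \<Sum>x\<in>ends_at U v. wt U x Y) = (\<lambda>Y. - (delta (end_fiber U (fthick U v)) Y - delta (end_fiber U (ffirst U v)) Y - delta (end_fiber U (fsecond U v)) Y))"
    unfolding c(2) using c(3-5) by (simp add: wt_def fun_eq_iff algebra_simps)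
  show ?thesis unfolding eq using K0_relations.neg[OF c(1)] .
qed

lemma vertex_rel_out:
  assumes w: "wf_vertex C U v Tl Hd"
  shows "(\<lambda>Y. \<Sum>x\<in>ends_at U v. wt U x Y) \<in> K0_relations C"
proof -
  note c = vertex_rel_core[OF w]
  have eq: "(\<lambda>Y. \<Sum>x\<in>ends_at U v. wt U x Y) = (\<lambda>Y. delta (end_fiber U (fthick U v)) Y - delta (end_fiber U (ffirst U v)) Y - delta (end_fiber U (fsecond U v)) Y)"
    unfolding c(2) using c(3-5) by (simp add: wt_def fun_eq_iff algebra_simps)
  show ?thesis unfolding eq using c(1) .
qed

lemma boundary_rel:
  assumes C: "category C" and z: "zero_obj C z" and U: "wf_foam C U"
  shows "gamma0 (foam_boundary U) \<in> K0_relations C"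
proof -
  let ?E = "ends U"
  let ?B = "{x \<in> ends U. fkind U (end_vertex U x) = VBd}"
  let ?Vi = "{v \<in> fV U. fkind U v \<noteq> VBd}"
  have fE: "finite (fE U)" and fV: "finite (fV U)" using U unfolding wf_foam_def by auto
  have fin: "finite ?E" using finite_ends[OF fE] .
  have edges: "\<And>e. e \<in> fE U \<Longrightarrow> ftl U e \<in> fV U \<and> fhd U e \<in> fV U
        \<and> ftr U e \<in> hom C (fXt U e) (fXh U e) \<and> iso C (ftr U e)"
    using U unfolding wf_foam_def by auto
  have verts: "\<And>v. v \<in> fV U \<Longrightarrow> (case fkind U v of
         VBd \<Rightarrow> card (ends_at U v) = 1
       | VIn \<Rightarrow> wf_vertex C U v Hd Tl
       | VOut \<Rightarrow> wf_vertex C U v Tl Hd)"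
    using U unfolding wf_foam_def by blast
  have tot: "(\<lambda>Y. \<Sum>x\<in>?E. wt U x Y) \<in> K0_relations C"
  proof -
    have eq: "\<And>Y. (\<Sum>x\<in>?E. wt U x Y) = (\<Sum>e\<in>fE U. delta (fXh U e) Y - delta (fXt U e) Y)"
    proof -
      fix Y
      have "(\<Sum>x\<in>?E. wt U x Y) = (\<Sum>e\<in>fE U. \<Sum>s\<in>UNIV. wt U (e, s) Y)"
        unfolding ends_def sum.cartesian_product by (simp add: case_prod_unfold)
      also have "\<dots> = (\<Sum>e\<in>fE U. delta (fXh U e) Y - delta (fXt U e) Y)"
        by (simp add: UNIV_side wt_def)
      finally show "?thesis Y" .
    qed
    have "(\<lambda>Y. \<Sum>e\<in>fE U. delta (fXh U e) Y - delta (fXt U e) Y) \<in> K0_relations C"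
      using fE by (rule rel_sum) (use edges rel_iso[OF C z] in blast)
    thus ?thesis by (rule rel_cong) (rule eq[symmetric])
  qed
  have int: "(\<lambda>Y. \<Sum>x\<in>?E - ?B. wt U x Y) \<in> K0_relations C"
  proof -
    have eq: "\<And>Y. (\<Sum>x\<in>?E - ?B. wt U x Y) = (\<Sum>v\<in>?Vi. \<Sum>x\<in>ends_at U v. wt U x Y)"
    proof -
      fix Y
      have sub: "end_vertex U ` (?E - ?B) \<subseteq> ?Vi"
      proof
        fix v assume "v \<in> end_vertex U ` (?E - ?B)"
        then obtain x where x: "x \<in> ?E" "fkind U (end_vertex U x) \<noteq> VBd" "v = end_vertex U x" by auto
        obtain e s where "x = (e, s)" "e \<in> fE U" using x(1) ends_def by (cases x) auto
        hence "v \<in> fV U" using x edges by (cases s) auto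
        thus "v \<in> ?Vi" using x by auto
      qed
      have seq: "\<And>v. v \<in> ?Vi \<Longrightarrow> {x \<in> ?E - ?B. end_vertex U x = v} = ends_at U v"
        by (auto simp: ends_at_def)
      have "(\<Sum>x\<in>?E - ?B. wt U x Y) = (\<Sum>v\<in>?Vi. \<Sum>x\<in>{x \<in> ?E - ?B. end_vertex U x = v}. wt U x Y)"
        using sum.group[OF _ _ sub, of "\<lambda>x. wt U x Y"] fin fV by auto
      also have "\<dots> = (\<Sum>v\<in>?Vi. \<Sum>x\<in>ends_at U v. wt U x Y)"
        by (rule sum.cong[OF refl]) (simp only: seq)
      finally show "?thesis Y" .
    qed
    have "(\<lambda>Y. \<Sum>v\<in>?Vi. \<Sum>x\<in>ends_at U v. wt U x Y) \<in> K0_relations C"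
    proof (rule rel_sum[where f = "\<lambda>v Y. \<Sum>x\<in>ends_at U v. wt U x Y", simplified])
      show "finite ?Vi" using fV by simp
    next
      fix v assume v: "v \<in> ?Vi"
      show "(\<lambda>Y. \<Sum>x\<in>ends_at U v. wt U x Y) \<in> K0_relations C"
      proof (cases "fkind U v")
        case VIn thus ?thesis using verts[of v] v by (auto intro: vertex_rel_in vertex_rel_out)
      next
        case VOut thus ?thesis using verts[of v] v by (auto intro: vertex_rel_in vertex_rel_out)
      next
        case VBd thus ?thesis using v by simp
      qed
    qed
    thus ?thesis by (rule rel_cong) (rule eq[symmetric])
  qed
  have bd: "\<And>Y. gamma0 (foam_boundary U) Y = (\<Sum>x\<in>?B. wt U x Y)"
    unfolding foam_boundary_def using fin
    by (subst gamma0_img) (auto simp: wt_def delta_def intro!: sum.cong)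
  have split: "\<And>Y. (\<Sum>x\<in>?E. wt U x Y) = (\<Sum>x\<in>?B. wt U x Y) + (\<Sum>x\<in>?E - ?B. wt U x Y)"
    using fin by (subst sum.subset_diff[of ?B]) auto
  show ?thesis
    by (rule rel_diff'[OF tot int]) (simp add: bd split)
qed



definition bset :: "('o, 'm) cat \<Rightarrow> 'o zfoam set" where
  "bset C = {D. \<exists>U. wf_foam C U \<and> foam_boundary U = D}"

definition empty_foam :: "('o, 'm) foam1" where
  "empty_foam = \<lparr>fV = {}, fE = {}, ftl = \<lambda>_. 0, fhd = \<lambda>_. 0, fXt = \<lambda>_. undefined,
     fXh = \<lambda>_. undefined, ftr = \<lambda>_. undefined, fkind = \<lambda>_. VBd, ffirst = \<lambda>_. (0, Hd),
     fsecond = \<lambda>_. (0, Hd), fthick = \<lambda>_. (0, Hd), fses1 = \<lambda>_. undefined, fses2 = \<lambda>_. undefined,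
     fCirc = {}, fcobj = \<lambda>_. undefined, fcmon = \<lambda>_. undefined\<rparr>"

lemma bset_empty: "{#} \<in> bset C"
proof -
  have "wf_foam C empty_foam" by (simp add: wf_foam_def empty_foam_def)
  moreover have "foam_boundary empty_foam = {#}"
    by (simp add: foam_boundary_def empty_foam_def ends_def)
  ultimately show ?thesis unfolding bset_def by blast
qed

definition arc_foam :: "('o, 'm) cat \<Rightarrow> 'o \<Rightarrow> ('o, 'm) foam1" where
  "arc_foam C X = \<lparr>fV = {0, 1}, fE = {0}, ftl = \<lambda>_. 0, fhd = \<lambda>_. 1, fXt = \<lambda>_. X,
     fXh = \<lambda>_. X, ftr = \<lambda>_. cat_idn C X, fkind = \<lambda>_. VBd, ffirst = \<lambda>_. (0, Hd),
     fsecond = \<lambda>_. (0, Hd), fthick = \<lambda>_. (0, Hd), fses1 = \<lambda>_. cat_idn C X, fses2 = \<lambda>_. cat_idn C X,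
     fCirc = {}, fcobj = \<lambda>_. X, fcmon = \<lambda>_. cat_idn C X\<rparr>"

lemma arc_sel[simp]: "fV (arc_foam C X) = {0, 1}" "fE (arc_foam C X) = {0}" "ftl (arc_foam C X) e = 0"
  "fhd (arc_foam C X) e = 1" "fXt (arc_foam C X) e = X" "fXh (arc_foam C X) e = X"
  "ftr (arc_foam C X) e = cat_idn C X" "fkind (arc_foam C X) v = VBd" "fCirc (arc_foam C X) = {}"
  by (simp_all add: arc_foam_def)

lemma ends_arc: "ends (arc_foam C X) = {(0, Hd), (0, Tl)}"
  by (auto simp: ends_def UNIV_side)

lemma bset_arc: assumes C: "category C" and X: "X \<in> cat_obj C"
  shows "{#(True, X), (False, X)#} \<in> bset C"
proof -
  have ea: "ends_at (arc_foam C X) v = (if v = 0 then {(0, Tl)} else if v = 1 then {(0, Hd)} else {})" for v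
    unfolding ends_at_def ends_arc by auto
  have "wf_foam C (arc_foam C X)"
    unfolding wf_foam_def using cat_idn_hom[OF C X] iso_idn[OF C X]
    by (auto simp: ea)
  moreover have "{x \<in> ends (arc_foam C X). fkind (arc_foam C X) (end_vertex (arc_foam C X) x) = VBd}
      = {(0, Hd), (0, Tl)}" (is "?L = _") unfolding ends_arc by auto
  hence "foam_boundary (arc_foam C X) = {#(True, X), (False, X)#}"
    unfolding foam_boundary_def by (simp only:) simp
  ultimately show ?thesis unfolding bset_def by blast
qed

definition vfib :: "('o, 'm) cat \<Rightarrow> 'm \<Rightarrow> 'm \<Rightarrow> nat \<Rightarrow> 'o" where
  "vfib C f g e = (if e = 0 then cat_src C f else if e = 1 then cat_tgt C g else cat_tgt C f)"

definition vert_foam :: "('o, 'm) cat \<Rightarrow> 'm \<Rightarrow> 'm \<Rightarrow> ('o, 'm) foam1" where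
  "vert_foam C f g = \<lparr>fV = {0, 1, 2, 3}, fE = {0, 1, 2},
     ftl = \<lambda>e. if e = 0 then 1 else if e = 1 then 2 else 0,
     fhd = \<lambda>e. if e = 2 then 3 else 0,
     fXt = vfib C f g, fXh = vfib C f g, ftr = \<lambda>e. cat_idn C (vfib C f g e),
     fkind = \<lambda>v. if v = 0 then VIn else VBd, ffirst = \<lambda>_. (0, Hd),
     fsecond = \<lambda>_. (1, Hd), fthick = \<lambda>_. (2, Tl), fses1 = \<lambda>_. f, fses2 = \<lambda>_. g,
     fCirc = {}, fcobj = \<lambda>_. undefined, fcmon = \<lambda>_. undefined\<rparr>"

lemma vert_sel[simp]: "fV (vert_foam C f g) = {0, 1, 2, 3}" "fE (vert_foam C f g) = {0, 1, 2}"
  "ftl (vert_foam C f g) e = (if e = 0 then 1 else if e = 1 then 2 else 0)"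
  "fhd (vert_foam C f g) e = (if e = 2 then 3 else 0)"
  "fXt (vert_foam C f g) e = vfib C f g e" "fXh (vert_foam C f g) e = vfib C f g e"
  "ftr (vert_foam C f g) e = cat_idn C (vfib C f g e)"
  "fkind (vert_foam C f g) v = (if v = 0 then VIn else VBd)"
  "ffirst (vert_foam C f g) v = (0, Hd)" "fsecond (vert_foam C f g) v = (1, Hd)"
  "fthick (vert_foam C f g) v = (2, Tl)" "fses1 (vert_foam C f g) v = f" "fses2 (vert_foam C f g) v = g"
  "fCirc (vert_foam C f g) = {}"
  by (simp_all add: vert_foam_def)

lemma ends_vert: "ends (vert_foam C f g) = {(0, Hd), (0, Tl), (1, Hd), (1, Tl), (2, Hd), (2, Tl)}"
  by (auto simp: ends_def UNIV_side)

lemma bset_vert: assumes C: "category C" and se: "short_exact C f g"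
  shows "{#(True, cat_tgt C f), (False, cat_src C f), (False, cat_tgt C g)#} \<in> bset C"
proof -
  let ?U = "vert_foam C f g"
  have fa: "f \<in> cat_arr C" "g \<in> cat_arr C" "cat_tgt C f = cat_src C g"
    using se by (auto simp: short_exact_def is_kernel_def)
  have ob: "vfib C f g e \<in> cat_obj C" for e
    using fa C unfolding category_def vfib_def by auto
  have ea: "ends_at ?U v = (if v = 0 then {(0, Hd), (1, Hd), (2, Tl)} else if v = 1 then {(0, Tl)}
      else if v = 2 then {(1, Tl)} else if v = 3 then {(2, Hd)} else {})" for v
    unfolding ends_at_def ends_vert by auto
  have wv: "wf_vertex C ?U 0 Hd Tl"
    unfolding wf_vertex_def using fa se
    by (simp add: ea vfib_def hom_def)
  have "wf_foam C ?U"
    unfolding wf_foam_def using cat_idn_hom[OF C ob] iso_idn[OF C ob] wv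
    by (auto simp: ea)
  moreover have "{x \<in> ends ?U. fkind ?U (end_vertex ?U x) = VBd}
      = {(0, Tl), (1, Tl), (2, Hd)}" unfolding ends_vert by auto
  hence "foam_boundary ?U = {#(True, cat_tgt C f), (False, cat_src C f), (False, cat_tgt C g)#}"
    unfolding foam_boundary_def by (simp only:) (simp add: vfib_def)
  ultimately show ?thesis unfolding bset_def by blast
qed



definition mapL :: "edge_end \<Rightarrow> edge_end" where "mapL x = (2 * fst x, snd x)"
definition mapR :: "edge_end \<Rightarrow> edge_end" where "mapR x = (Suc (2 * fst x), snd x)"

definition funion :: "('o, 'm) foam1 \<Rightarrow> ('o, 'm) foam1 \<Rightarrow> ('o, 'm) foam1" where
  "funion U W = \<lparr>fV = (\<lambda>v. 2 * v) ` fV U \<union> (\<lambda>v. Suc (2 * v)) ` fV W,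
     fE = (\<lambda>v. 2 * v) ` fE U \<union> (\<lambda>v. Suc (2 * v)) ` fE W,
     ftl = \<lambda>e. if even e then 2 * ftl U (e div 2) else Suc (2 * ftl W (e div 2)),
     fhd = \<lambda>e. if even e then 2 * fhd U (e div 2) else Suc (2 * fhd W (e div 2)),
     fXt = \<lambda>e. if even e then fXt U (e div 2) else fXt W (e div 2),
     fXh = \<lambda>e. if even e then fXh U (e div 2) else fXh W (e div 2),
     ftr = \<lambda>e. if even e then ftr U (e div 2) else ftr W (e div 2),
     fkind = \<lambda>e. if even e then fkind U (e div 2) else fkind W (e div 2),
     ffirst = \<lambda>e. if even e then mapL (ffirst U (e div 2)) else mapR (ffirst W (e div 2)),
     fsecond = \<lambda>e. if even e then mapL (fsecond U (e div 2)) else mapR (fsecond W (e div 2)),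
     fthick = \<lambda>e. if even e then mapL (fthick U (e div 2)) else mapR (fthick W (e div 2)),
     fses1 = \<lambda>e. if even e then fses1 U (e div 2) else fses1 W (e div 2),
     fses2 = \<lambda>e. if even e then fses2 U (e div 2) else fses2 W (e div 2),
     fCirc = (\<lambda>v. 2 * v) ` fCirc U \<union> (\<lambda>v. Suc (2 * v)) ` fCirc W,
     fcobj = \<lambda>e. if even e then fcobj U (e div 2) else fcobj W (e div 2),
     fcmon = \<lambda>e. if even e then fcmon U (e div 2) else fcmon W (e div 2)\<rparr>"

lemma funion_sel[simp]:
  "fV (funion U W) = (\<lambda>v. 2 * v) ` fV U \<union> (\<lambda>v. Suc (2 * v)) ` fV W"
  "fE (funion U W) = (\<lambda>v. 2 * v) ` fE U \<union> (\<lambda>v. Suc (2 * v)) ` fE W"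
  "fCirc (funion U W) = (\<lambda>v. 2 * v) ` fCirc U \<union> (\<lambda>v. Suc (2 * v)) ` fCirc W"
  "ftl (funion U W) (2 * e) = 2 * ftl U e" "ftl (funion U W) (Suc (2 * e)) = Suc (2 * ftl W e)"
  "fhd (funion U W) (2 * e) = 2 * fhd U e" "fhd (funion U W) (Suc (2 * e)) = Suc (2 * fhd W e)"
  "fXt (funion U W) (2 * e) = fXt U e" "fXt (funion U W) (Suc (2 * e)) = fXt W e"
  "fXh (funion U W) (2 * e) = fXh U e" "fXh (funion U W) (Suc (2 * e)) = fXh W e"
  "ftr (funion U W) (2 * e) = ftr U e" "ftr (funion U W) (Suc (2 * e)) = ftr W e"
  "fkind (funion U W) (2 * e) = fkind U e" "fkind (funion U W) (Suc (2 * e)) = fkind W e"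
  "ffirst (funion U W) (2 * e) = mapL (ffirst U e)" "ffirst (funion U W) (Suc (2 * e)) = mapR (ffirst W e)"
  "fsecond (funion U W) (2 * e) = mapL (fsecond U e)" "fsecond (funion U W) (Suc (2 * e)) = mapR (fsecond W e)"
  "fthick (funion U W) (2 * e) = mapL (fthick U e)" "fthick (funion U W) (Suc (2 * e)) = mapR (fthick W e)"
  "fses1 (funion U W) (2 * e) = fses1 U e" "fses1 (funion U W) (Suc (2 * e)) = fses1 W e"
  "fses2 (funion U W) (2 * e) = fses2 U e" "fses2 (funion U W) (Suc (2 * e)) = fses2 W e"
  "fcobj (funion U W) (2 * e) = fcobj U e" "fcobj (funion U W) (Suc (2 * e)) = fcobj W e"
  "fcmon (funion U W) (2 * e) = fcmon U e" "fcmon (funion U W) (Suc (2 * e)) = fcmon W e"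
  by (simp_all add: funion_def)

lemma inj_mapL: "inj mapL" and inj_mapR: "inj mapR"
  by (auto simp: inj_def mapL_def mapR_def prod_eq_iff)

lemma snd_map[simp]: "snd (mapL x) = snd x" "snd (mapR x) = snd x"
  by (simp_all add: mapL_def mapR_def)

lemma end_vertex_L[simp]: "end_vertex (funion U W) (mapL x) = 2 * end_vertex U x"
  and end_vertex_R[simp]: "end_vertex (funion U W) (mapR x) = Suc (2 * end_vertex W x)"
  and end_fiber_L[simp]: "end_fiber (funion U W) (mapL x) = end_fiber U x"
  and end_fiber_R[simp]: "end_fiber (funion U W) (mapR x) = end_fiber W x"
  by (cases x; cases "snd x"; simp add: mapL_def mapR_def)+

lemma ends_funion: "ends (funion U W) = mapL ` ends U \<union> mapR ` ends W"
proof -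
  have "ends (funion U W) \<subseteq> mapL ` ends U \<union> mapR ` ends W"
  proof
    fix x assume "x \<in> ends (funion U W)"
    then obtain e s where x: "x = (e, s)" "e \<in> fE (funion U W)" unfolding ends_def by auto
    thus "x \<in> mapL ` ends U \<union> mapR ` ends W"
      by (auto simp: ends_def mapL_def mapR_def image_iff)
  qed
  moreover have "mapL ` ends U \<union> mapR ` ends W \<subseteq> ends (funion U W)"
    by (auto simp: ends_def mapL_def mapR_def)
  ultimately show ?thesis by blast
qed

lemma mapL_R_ne: "mapL x \<noteq> mapR y"
  by (simp add: mapL_def mapR_def prod_eq_iff) presburger

lemma ends_at_L: "ends_at (funion U W) (2 * u) = mapL ` ends_at U u"
  unfolding ends_at_def ends_funion by (auto simp: image_iff) presburger

lemma ends_at_R: "ends_at (funion U W) (Suc (2 * u)) = mapR ` ends_at W u"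
  unfolding ends_at_def ends_funion by (auto simp: image_iff) presburger

lemma wf_vertex_L: "wf_vertex C U u a b \<Longrightarrow> wf_vertex C (funion U W) (2 * u) a b"
  unfolding wf_vertex_def ends_at_L
  using card_image[OF inj_on_subset[OF inj_mapL subset_UNIV], of "ends_at U u"] by auto

lemma wf_vertex_R: "wf_vertex C W u a b \<Longrightarrow> wf_vertex C (funion U W) (Suc (2 * u)) a b"
  unfolding wf_vertex_def ends_at_R
  using card_image[OF inj_on_subset[OF inj_mapR subset_UNIV], of "ends_at W u"] by auto

lemma even_odd_cases:
  fixes v :: nat
  obtains u where "v = 2 * u" | u where "v = Suc (2 * u)"
  by (metis oddE evenE Suc_eq_plus1)

lemma wf_funion:
  assumes U: "wf_foam C U" and W: "wf_foam C W"
  shows "wf_foam C (funion U W)"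
proof -
  let ?L = "funion U W"
  have fin: "finite (fV ?L)" "finite (fE ?L)" "finite (fCirc ?L)"
    using U W unfolding wf_foam_def by auto
  have ed: "\<forall>e\<in>fE ?L. ftl ?L e \<in> fV ?L \<and> fhd ?L e \<in> fV ?L
        \<and> ftr ?L e \<in> hom C (fXt ?L e) (fXh ?L e) \<and> iso C (ftr ?L e)"
    using U W unfolding wf_foam_def by auto
  have ci: "\<forall>c\<in>fCirc ?L. fcmon ?L c \<in> hom C (fcobj ?L c) (fcobj ?L c) \<and> iso C (fcmon ?L c)"
    using U W unfolding wf_foam_def by auto
  have ca: "ends_at ?L v = mapL ` A \<Longrightarrow> card (ends_at ?L v) = card A" for v A
    using card_image[OF inj_on_subset[OF inj_mapL subset_UNIV], of A] by simp
  have cb: "ends_at ?L v = mapR ` A \<Longrightarrow> card (ends_at ?L v) = card A" for v A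
    using card_image[OF inj_on_subset[OF inj_mapR subset_UNIV], of A] by simp
  have ve: "\<forall>v\<in>fV ?L. case fkind ?L v of
         VBd \<Rightarrow> card (ends_at ?L v) = 1
       | VIn \<Rightarrow> wf_vertex C ?L v Hd Tl
       | VOut \<Rightarrow> wf_vertex C ?L v Tl Hd"
  proof
    fix v assume "v \<in> fV ?L"
    then consider u where "v = 2 * u" "u \<in> fV U" | u where "v = Suc (2 * u)" "u \<in> fV W" by auto
    thus "case fkind ?L v of
         VBd \<Rightarrow> card (ends_at ?L v) = 1
       | VIn \<Rightarrow> wf_vertex C ?L v Hd Tl
       | VOut \<Rightarrow> wf_vertex C ?L v Tl Hd"
    proof cases
      case 1
      have "case fkind U u of VBd \<Rightarrow> card (ends_at U u) = 1
       | VIn \<Rightarrow> wf_vertex C U u Hd Tl | VOut \<Rightarrow> wf_vertex C U u Tl Hd"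
        using U 1 unfolding wf_foam_def by blast
      thus ?thesis using 1 ca[OF ends_at_L] wf_vertex_L by (cases "fkind U u") auto
    next
      case 2
      have "case fkind W u of VBd \<Rightarrow> card (ends_at W u) = 1
       | VIn \<Rightarrow> wf_vertex C W u Hd Tl | VOut \<Rightarrow> wf_vertex C W u Tl Hd"
        using W 2 unfolding wf_foam_def by blast
      thus ?thesis using 2 cb[OF ends_at_R] wf_vertex_R by (cases "fkind W u") auto
    qed
  qed
  show ?thesis unfolding wf_foam_def using fin ed ci ve by blast
qed

lemma boundary_funion:
  assumes fU: "finite (fE U)" and fW: "finite (fE W)"
  shows "foam_boundary (funion U W) = foam_boundary U + foam_boundary W"
proof -
  let ?L = "funion U W"
  let ?BU = "{x \<in> ends U. fkind U (end_vertex U x) = VBd}"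
  let ?BW = "{x \<in> ends W. fkind W (end_vertex W x) = VBd}"
  have finU: "finite ?BU" using finite_ends[OF fU] by simp
  have finW: "finite ?BW" using finite_ends[OF fW] by simp
  have B: "{x \<in> ends ?L. fkind ?L (end_vertex ?L x) = VBd} = mapL ` ?BU \<union> mapR ` ?BW"
    unfolding ends_funion by auto
  have disj: "mapL ` ?BU \<inter> mapR ` ?BW = {}" using mapL_R_ne by blast
  have m: "mset_set (mapL ` ?BU \<union> mapR ` ?BW) = image_mset mapL (mset_set ?BU) + image_mset mapR (mset_set ?BW)"
    using mset_set_Union[OF _ _ disj] finU finW
      image_mset_mset_set[OF inj_on_subset[OF inj_mapL subset_UNIV], of ?BU]
      image_mset_mset_set[OF inj_on_subset[OF inj_mapR subset_UNIV], of ?BW] by simp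
  show ?thesis
    unfolding foam_boundary_def B m by (simp add: multiset.map_comp o_def)
qed

lemma bset_plus: "D \<in> bset C \<Longrightarrow> E \<in> bset C \<Longrightarrow> D + E \<in> bset C"
proof -
  assume "D \<in> bset C" "E \<in> bset C"
  then obtain U W where U: "wf_foam C U" "foam_boundary U = D" and W: "wf_foam C W" "foam_boundary W = E"
    unfolding bset_def by blast
  have "wf_foam C (funion U W)" using wf_funion[OF U(1) W(1)] .
  moreover have "foam_boundary (funion U W) = D + E"
    using boundary_funion[of U W] U W unfolding wf_foam_def by auto
  ultimately show ?thesis unfolding bset_def by blast
qed



lemma zneg_add_mset[simp]: "zneg (add_mset (s, X) M) = add_mset (\<not> s, X) (zneg M)"
  by (simp add: zneg_def)
lemma zneg_plus: "zneg (M + N) = zneg M + zneg N" by (simp add: zneg_def)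
lemma zneg_empty[simp]: "zneg {#} = {#}" by (simp add: zneg_def)

lemma bset_arcs: assumes C: "category C" shows "M \<in> zfoams C \<Longrightarrow> M + zneg M \<in> bset C"
proof (induction M)
  case empty then show ?case using bset_empty by simp
next
  case (add a M)
  obtain s X where a: "a = (s, X)" by (cases a)
  have M: "M \<in> zfoams C" and X: "X \<in> cat_obj C" using add.prems a by (auto simp: zfoams_def)
  have arc: "{#(s, X), (\<not> s, X)#} \<in> bset C"
    using bset_arc[OF C X] by (cases s) (auto simp: add_mset_commute)
  have eq: "add_mset a M + zneg (add_mset a M) = (M + zneg M) + {#(s, X), (\<not> s, X)#}"
    by (simp add: a)
  show ?case unfolding eq by (rule bset_plus[OF add.IH[OF M] arc])
qed

lemma bset_bal:
  assumes C: "category C" and Q: "Q \<in> zfoams C" and g: "\<And>Y. gamma0 Q Y = 0"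
  shows "Q \<in> bset C"
proof -
  let ?P = "filter_mset fst Q"
  have P: "?P \<in> zfoams C" using Q by (auto simp: zfoams_def)
  have "Q = ?P + zneg ?P"
  proof (rule multiset_eqI)
    fix x :: "bool \<times> 'a"
    obtain s X where x: "x = (s, X)" by (cases x)
    have "count Q (True, X) = count Q (False, X)" using g[of X] by (simp add: gamma0_def)
    thus "count Q x = count (?P + zneg ?P) x" by (cases s) (simp_all add: x count_zneg)
  qed
  thus ?thesis using bset_arcs[OF C P] by simp
qed

lemma cob_rel_sym: "(M, N) \<in> cob_rel C \<Longrightarrow> (N, M) \<in> cob_rel C"
proof -
  assume a: "(M, N) \<in> cob_rel C"
  let ?R = "\<lambda>A B. cobordant C A B \<or> cobordant C B A"
  have s: "symp ?R" by (auto simp: symp_def)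
  have "?R\<^sup>*\<^sup>* M N" using a by (simp add: cob_rel_def)
  hence "?R\<^sup>*\<^sup>* N M" using symp_rtranclp[OF s] by (auto simp: symp_def)
  thus ?thesis using a by (simp add: cob_rel_def)
qed

lemma cob_rel_trans: "(M, N) \<in> cob_rel C \<Longrightarrow> (N, P) \<in> cob_rel C \<Longrightarrow> (M, P) \<in> cob_rel C"
  unfolding cob_rel_def by (auto intro: rtranclp_trans)

lemma cob_rel_refl: "M \<in> zfoams C \<Longrightarrow> (M, M) \<in> cob_rel C"
  unfolding cob_rel_def by auto

lemma cob_rel_step: "M \<in> zfoams C \<Longrightarrow> N \<in> zfoams C \<Longrightarrow> cobordant C M N \<Longrightarrow> (M, N) \<in> cob_rel C"
  unfolding cob_rel_def by auto

lemma cob_add: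
  assumes C: "category C" and M: "M \<in> zfoams C" and D: "D \<in> bset C" "D \<in> zfoams C"
  shows "(M, M + D) \<in> cob_rel C"
proof -
  have "D + (M + zneg M) \<in> bset C" using bset_plus[OF D(1) bset_arcs[OF C M]] .
  then obtain U where "wf_foam C U" "foam_boundary U = (M + D) + zneg M"
    unfolding bset_def by (auto simp: ac_simps)
  hence "cobordant C M (M + D)" unfolding cobordant_def by blast
  thus ?thesis using M D zfoams_plus cob_rel_step by blast
qed

lemma cob_eq_gamma:
  assumes C: "category C" and M: "M \<in> zfoams C" and N: "N \<in> zfoams C" and g: "gamma0 M = gamma0 N"
  shows "(M, N) \<in> cob_rel C"
proof -
  let ?Q = "M + zneg N"
  have Q: "?Q \<in> zfoams C" using M N zfoams_plus zfoams_zneg by blast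
  have "\<And>Y. gamma0 ?Q Y = 0" using g by (simp add: gamma0_plus gamma0_zneg)
  hence Qb: "?Q \<in> bset C" using bset_bal[OF C Q] by blast
  have NN: "N + zneg N \<in> zfoams C" using N zfoams_plus zfoams_zneg by blast
  have 1: "(M, M + (N + zneg N)) \<in> cob_rel C" using cob_add[OF C M bset_arcs[OF C N] NN] .
  have 2: "(N, N + ?Q) \<in> cob_rel C" using cob_add[OF C N Qb Q] .
  have "M + (N + zneg N) = N + ?Q" by (simp add: ac_simps)
  thus ?thesis using 1 2 cob_rel_sym cob_rel_trans by metis
qed

lemma exists_foam:
  assumes "finite S"
  shows "S \<subseteq> cat_obj C \<Longrightarrow> (\<And>Y. \<phi> Y \<noteq> 0 \<Longrightarrow> Y \<in> S) \<Longrightarrow> \<exists>V \<in> zfoams C. gamma0 V = \<phi>"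
  using assms
proof (induction S arbitrary: \<phi> rule: finite_induct)
  case empty
  hence "\<phi> = (\<lambda>_. 0)" by auto
  thus ?case by (intro bexI[of _ "{#}"]) (auto simp: gamma0_def zfoams_def)
next
  case (insert X S)
  let ?\<phi>' = "\<phi>(X := 0)"
  have "\<And>Y. ?\<phi>' Y \<noteq> 0 \<Longrightarrow> Y \<in> S" using insert.prems(2) by (auto split: if_splits)
  then obtain V where V: "V \<in> zfoams C" "gamma0 V = ?\<phi>'"
    using insert.IH[of ?\<phi>'] insert.prems(1) by blast
  let ?W = "replicate_mset (nat (\<phi> X)) (True, X) + replicate_mset (nat (- \<phi> X)) (False, X)"
  have W: "?W \<in> zfoams C" using insert.prems by (auto simp: zfoams_def)
  have gW: "gamma0 ?W = (\<lambda>Y. if Y = X then \<phi> X else 0)"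
    unfolding gamma0_def by (auto simp: fun_eq_iff)
  have "gamma0 (V + ?W) = \<phi>"
    by (simp only: gamma0_plus[of V ?W] V(2) gW) (auto simp: fun_eq_iff)
  thus ?case using V W zfoams_plus by blast
qed

lemma exists_foam': "\<phi> \<in> free_ab C \<Longrightarrow> \<exists>V \<in> zfoams C. gamma0 V = \<phi>"
  unfolding free_ab_def by (rule exists_foam[of "{X. \<phi> X \<noteq> 0}"]) auto

lemma inj_part:
  assumes C: "category C"
  shows "r \<in> K0_relations C \<Longrightarrow> \<forall>M N. M \<in> zfoams C \<longrightarrow> N \<in> zfoams C \<longrightarrow>
           (\<forall>Y. gamma0 M Y = gamma0 N Y + r Y) \<longrightarrow> (M, N) \<in> cob_rel C"
proof (induction rule: K0_relations.induct)
  case zero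
  then show ?case using cob_eq_gamma[OF C] by (auto simp: fun_eq_iff)
next
  case (gen f g)
  let ?V = "{#(True, cat_tgt C f), (False, cat_src C f), (False, cat_tgt C g)#}"
  have Vb: "?V \<in> bset C" using bset_vert[OF C gen] .
  have fa: "f \<in> cat_arr C" "g \<in> cat_arr C" using gen by (auto simp: short_exact_def is_kernel_def)
  hence Vz: "?V \<in> zfoams C" using C unfolding category_def zfoams_def by auto
  show ?case
  proof (intro allI impI)
    fix M N assume M: "M \<in> zfoams C" and N: "N \<in> zfoams C"
      and g: "\<forall>Y. gamma0 M Y = gamma0 N Y + (delta (cat_tgt C f) Y - delta (cat_src C f) Y - delta (cat_tgt C g) Y)"
    have "gamma0 M = gamma0 (N + ?V)"
      using g by (auto simp: fun_eq_iff gamma0_plus gamma0_def delta_def)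
    hence 1: "(M, N + ?V) \<in> cob_rel C" using cob_eq_gamma[OF C M zfoams_plus[OF N Vz]] by simp
    have 2: "(N, N + ?V) \<in> cob_rel C" using cob_add[OF C N Vb Vz] .
    show "(M, N) \<in> cob_rel C" using 1 2 cob_rel_sym cob_rel_trans by metis
  qed
next
  case (add \<phi> \<psi>)
  show ?case
  proof (intro allI impI)
    fix M N assume M: "M \<in> zfoams C" and N: "N \<in> zfoams C"
      and g: "\<forall>Y. gamma0 M Y = gamma0 N Y + (\<phi> Y + \<psi> Y)"
    obtain V where V: "V \<in> zfoams C" "gamma0 V = \<psi>" using exists_foam' rel_free[OF C add.hyps(2)] by blast
    have P: "N + V \<in> zfoams C" using zfoams_plus[OF N V(1)] .
    have 1: "(M, N + V) \<in> cob_rel C"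
      using add.IH(1) M P g V(2) by (auto simp: gamma0_plus)
    have 2: "(N + V, N) \<in> cob_rel C"
      using add.IH(2) N P V(2) by (auto simp: gamma0_plus)
    show "(M, N) \<in> cob_rel C" using 1 2 cob_rel_trans by blast
  qed
next
  case (neg \<phi>)
  show ?case
  proof (intro allI impI)
    fix M N assume M: "M \<in> zfoams C" and N: "N \<in> zfoams C"
      and g: "\<forall>Y. gamma0 M Y = gamma0 N Y + - \<phi> Y"
    have "(N, M) \<in> cob_rel C" using neg.IH M N g by auto
    thus "(M, N) \<in> cob_rel C" by (rule cob_rel_sym)
  qed
qed

lemma cobordant_rel:
  assumes C: "category C" and z: "zero_obj C z" and c: "cobordant C A B"
  shows "(\<lambda>Y. gamma0 B Y - gamma0 A Y) \<in> K0_relations C"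
proof -
  obtain U where U: "wf_foam C U" "foam_boundary U = B + zneg A" using c unfolding cobordant_def by blast
  have "gamma0 (foam_boundary U) \<in> K0_relations C" using boundary_rel[OF C z U(1)] .
  moreover have "gamma0 (foam_boundary U) = (\<lambda>Y. gamma0 B Y - gamma0 A Y)"
    unfolding U(2) by (simp add: gamma0_plus gamma0_zneg)
  ultimately show ?thesis by simp
qed

lemma part1:
  assumes C: "category C" and z: "zero_obj C z" and MN: "(M, N) \<in> cob_rel C"
  shows "(gamma0 M, gamma0 N) \<in> K0_rel C"
proof -
  let ?R = "\<lambda>A B. cobordant C A B \<or> cobordant C B A"
  have M: "M \<in> zfoams C" and N: "N \<in> zfoams C" and r: "?R\<^sup>*\<^sup>* M N" using MN by (auto simp: cob_rel_def)
  have "(\<lambda>Y. gamma0 M Y - gamma0 N Y) \<in> K0_relations C" using r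
  proof (induction rule: rtranclp_induct)
    case base
    show ?case by (rule rel_zero') simp
  next
    case (step P Q)
    have "(\<lambda>Y. gamma0 P Y - gamma0 Q Y) \<in> K0_relations C"
    proof (cases "cobordant C P Q")
      case True
      show ?thesis using K0_relations.neg[OF cobordant_rel[OF C z True]] by simp
    next
      case False
      hence "cobordant C Q P" using step by blast
      thus ?thesis using cobordant_rel[OF C z] by blast
    qed
    thus ?case using rel_add'[OF step.IH] by simp
  qed
  thus ?thesis using gamma0_free[OF M] gamma0_free[OF N] unfolding K0_rel_def by simp
qed

lemma equiv_cob: "equiv (zfoams C) (cob_rel C)"
proof -
  have "refl_on (zfoams C) (cob_rel C)"
    unfolding refl_on_def using cob_rel_refl by (auto simp: cob_rel_def)
  moreover have "sym (cob_rel C)" unfolding sym_def using cob_rel_sym by blast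
  moreover have "trans (cob_rel C)" unfolding trans_def using cob_rel_trans by blast
  moreover have "cob_rel C \<subseteq> zfoams C \<times> zfoams C" by (auto simp: cob_rel_def)
  ultimately show ?thesis unfolding equiv_def by blast
qed

lemma equiv_K0: "equiv (free_ab C) (K0_rel C)"
proof -
  have "refl_on (free_ab C) (K0_rel C)"
    unfolding refl_on_def K0_rel_def by (auto intro: rel_zero')
  moreover have "sym (K0_rel C)"
    unfolding sym_def K0_rel_def by (auto intro: rel_neg')
  moreover have "trans (K0_rel C)"
    unfolding trans_def K0_rel_def
  proof (clarsimp)
    fix x y z
    assume "(\<lambda>Y. x Y - y Y) \<in> K0_relations C" "(\<lambda>Y. y Y - z Y) \<in> K0_relations C"
    thus "(\<lambda>Y. x Y - z Y) \<in> K0_relations C" by (rule rel_add') simp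
  qed
  moreover have "K0_rel C \<subseteq> free_ab C \<times> free_ab C" by (auto simp: K0_rel_def)
  ultimately show ?thesis unfolding equiv_def by blast
qed



lemma someM:
  assumes c: "c \<in> Cob0 C"
  shows "(SOME M. M \<in> c) \<in> c" "(SOME M. M \<in> c) \<in> zfoams C" "c = cob_rel C `` {SOME M. M \<in> c}"
proof -
  obtain M0 where M0: "M0 \<in> zfoams C" "c = cob_rel C `` {M0}"
    using c unfolding Cob0_def by (auto elim: quotientE)
  have "M0 \<in> c" using M0 equiv_class_self[OF equiv_cob] by simp
  thus s: "(SOME M. M \<in> c) \<in> c" by (rule someI)
  hence r: "(M0, SOME M. M \<in> c) \<in> cob_rel C" using M0 by simp
  thus "(SOME M. M \<in> c) \<in> zfoams C" by (simp add: cob_rel_def)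
  show "c = cob_rel C `` {SOME M. M \<in> c}" using M0(2) equiv_class_eq[OF equiv_cob r] by simp
qed

theorem mainTheorem3:
  fixes C :: "('o, 'm) cat"
  assumes "abelian_cat C"
  shows "(\<forall>M N. (M, N) \<in> cob_rel C \<longrightarrow> (gamma0 M, gamma0 N) \<in> K0_rel C)
       \<and> bij_betw (\<lambda>c. K0_rel C `` {gamma0 (SOME M. M \<in> c)}) (Cob0 C) (K0 C)
       \<and> (\<forall>M N :: 'o zfoam. gamma0 (M + N) = (\<lambda>Y. gamma0 M Y + gamma0 N Y))"
proof -
  have C: "category C" using assms by (simp add: abelian_cat_def)
  obtain z where z: "zero_obj C z" using assms by (auto simp: abelian_cat_def)
  have P1: "\<forall>M N. (M, N) \<in> cob_rel C \<longrightarrow> (gamma0 M, gamma0 N) \<in> K0_rel C"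
    using part1[OF C z] by blast
  let ?F = "\<lambda>c. K0_rel C `` {gamma0 (SOME M. M \<in> c)}"
  have inj: "inj_on ?F (Cob0 C)"
  proof (rule inj_onI)
    fix c1 c2 assume c1: "c1 \<in> Cob0 C" and c2: "c2 \<in> Cob0 C" and eq: "?F c1 = ?F c2"
    let ?M1 = "SOME M. M \<in> c1" and ?M2 = "SOME M. M \<in> c2"
    have z1: "?M1 \<in> zfoams C" and z2: "?M2 \<in> zfoams C" using someM c1 c2 by blast+
    have "(gamma0 ?M1, gamma0 ?M2) \<in> K0_rel C"
      using eq_equiv_class[OF eq equiv_K0 gamma0_free[OF z2]] .
    hence r: "(\<lambda>Y. gamma0 ?M1 Y - gamma0 ?M2 Y) \<in> K0_relations C" by (simp add: K0_rel_def)
    have "(?M1, ?M2) \<in> cob_rel C" using inj_part[OF C r] z1 z2 by auto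
    hence "cob_rel C `` {?M1} = cob_rel C `` {?M2}" by (rule equiv_class_eq[OF equiv_cob])
    thus "c1 = c2" using someM(3)[OF c1] someM(3)[OF c2] by simp
  qed
  have img: "?F ` Cob0 C = K0 C"
  proof
    show "?F ` Cob0 C \<subseteq> K0 C"
    proof
      fix K assume "K \<in> ?F ` Cob0 C"
      then obtain c where c: "c \<in> Cob0 C" "K = ?F c" by blast
      show "K \<in> K0 C" unfolding K0_def c(2)
        by (rule quotientI) (rule gamma0_free[OF someM(2)[OF c(1)]])
    qed
  next
    show "K0 C \<subseteq> ?F ` Cob0 C"
    proof
      fix K assume "K \<in> K0 C"
      then obtain \<phi> where \<phi>: "\<phi> \<in> free_ab C" "K = K0_rel C `` {\<phi>}"
        unfolding K0_def by (auto elim: quotientE)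
      obtain V where V: "V \<in> zfoams C" "gamma0 V = \<phi>" using exists_foam'[OF \<phi>(1)] by blast
      let ?c = "cob_rel C `` {V}"
      have c: "?c \<in> Cob0 C" unfolding Cob0_def using V(1) by (rule quotientI)
      have "(SOME M. M \<in> ?c) \<in> ?c" using someM(1)[OF c] .
      hence "(V, SOME M. M \<in> ?c) \<in> cob_rel C" by simp
      hence "(\<phi>, gamma0 (SOME M. M \<in> ?c)) \<in> K0_rel C" using part1[OF C z] V(2) by blast
      hence "K = ?F ?c" using \<phi>(2) equiv_class_eq[OF equiv_K0] by simp
      thus "K \<in> ?F ` Cob0 C" using c by blast
    qed
  qed
  have P2: "bij_betw ?F (Cob0 C) (K0 C)" unfolding bij_betw_def using inj img by blast
  have P3: "\<forall>M N :: 'o zfoam. gamma0 (M + N) = (\<lambda>Y. gamma0 M Y + gamma0 N Y)"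
    using gamma0_plus by blast
  show ?thesis using P1 P2 P3 by blast
qed

end
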